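(* Let $\Theta\subseteq\mathbb{R}$ be an interval (the parameter space), $X$ a sample space, and let $p(x\mid\theta)>0$ for all $x\in X$, $\theta\in\Theta$ be the sampling probability (or density) of $x$ given $\theta$. Suppose that to every single observation $x\in X$ a probability density $f(\theta\mid x)$ on $\Theta$ is assigned, and that a second, independent observation $x_2$ is taken into account by Bayes' rule, $$f(\theta\mid x_1x_2)=\frac{f(\theta\mid x_1)\,p(x_2\mid\theta)}{\int_\Theta f(\theta'\mid x_1)\,p(x_2\mid\theta')\,d\theta'} ,$$ where the denominators are finite and positive. Then the following are equivalent: (i) the result is invariant under reversing the order of the two observations, i.e. for all $x_1,x_2\in X$ and all $\theta\in\Theta$, $$\frac{f(\theta\mid x_1)\,p(x_2\mid\theta)}{\int_\Theta f(\theta'\mid x_1)\,p(x_2\mid\theta')\,d\theta'}=\frac{f(\theta\mid x_2)\,p(x_1\mid\theta)}{\int_\Theta f(\theta'\mid x_2)\,p(x_1\mid\theta')\,d\theta'} ;$$ (ii) there exists a nonnegative function $\pi$ on $\Theta$ (independent of $x$) such that for every $x\in X$, $\int_\Theta \pi(\theta')p(x\mid\theta')\,d\theta'\in(0,\infty)$ and $$f(\theta\mid x)=\frac{\pi(\theta)\,p(x\mid\theta)}{\int_\Theta\pi(\theta')\,p(x\mid\theta')\,d\theta'}\quad\text{for all }\theta\in\Theta .$$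
   Context: The function $\pi$ in (ii) is called the consistency factor; it is only a proportionality coefficient and is not required to be integrable over $\Theta$. *)

theory Defs
  imports "HOL-Analysis.Analysis"
begin

definition prob_density_on :: "real set \<Rightarrow> (real \<Rightarrow> real) \<Rightarrow> bool" where
  "prob_density_on \<Theta> g \<longleftrightarrow>
     (\<forall>\<theta>\<in>\<Theta>. 0 \<le> g \<theta>) \<and> set_integrable lborel \<Theta> g \<and> (LINT \<theta>:\<Theta>|lborel. g \<theta>) = 1"

definition bayes_update ::
  "real set \<Rightarrow> ('x \<Rightarrow> real \<Rightarrow> real) \<Rightarrow> ('x \<Rightarrow> real \<Rightarrow> real) \<Rightarrow> 'x \<Rightarrow> 'x \<Rightarrow> real \<Rightarrow> real" where
  "bayes_update \<Theta> f p x1 x2 \<theta> =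
     f x1 \<theta> * p x2 \<theta> / (LINT \<theta>':\<Theta>|lborel. f x1 \<theta>' * p x2 \<theta>')"

end

theory Submission
  imports Defs
begin

lemma set_int_eq:
  fixes g h :: "real \<Rightarrow> real"
  assumes "\<And>\<theta>. \<theta> \<in> \<Theta> \<Longrightarrow> g \<theta> = c * h \<theta>"
  shows "(LINT \<theta>:\<Theta>|lborel. g \<theta>) = c * (LINT \<theta>:\<Theta>|lborel. h \<theta>)"
    and "set_integrable lborel \<Theta> h \<Longrightarrow> set_integrable lborel \<Theta> g"
proof -
  have e: "(\<lambda>\<theta>. indicator \<Theta> \<theta> *\<^sub>R g \<theta>) = (\<lambda>\<theta>. c * (indicator \<Theta> \<theta> *\<^sub>R h \<theta>))"
    by (rule ext) (simp add: indicator_def assms)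
  show "(LINT \<theta>:\<Theta>|lborel. g \<theta>) = c * (LINT \<theta>:\<Theta>|lborel. h \<theta>)"
    unfolding set_lebesgue_integral_def e by simp
  show "set_integrable lborel \<Theta> h \<Longrightarrow> set_integrable lborel \<Theta> g"
    unfolding set_integrable_def e by simp
qed

theorem mainTheorem1:
  fixes \<Theta> :: "real set" and X :: "'x set"
    and p :: "'x \<Rightarrow> real \<Rightarrow> real" and f :: "'x \<Rightarrow> real \<Rightarrow> real"
  assumes interval: "is_interval \<Theta>"
    and p_pos: "\<And>x \<theta>. x \<in> X \<Longrightarrow> \<theta> \<in> \<Theta> \<Longrightarrow> 0 < p x \<theta>"
    and f_dens: "\<And>x. x \<in> X \<Longrightarrow> prob_density_on \<Theta> (f x)"
    and denom_int: "\<And>x1 x2. x1 \<in> X \<Longrightarrow> x2 \<in> X \<Longrightarrow>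
                      set_integrable lborel \<Theta> (\<lambda>\<theta>. f x1 \<theta> * p x2 \<theta>)"
    and denom_pos: "\<And>x1 x2. x1 \<in> X \<Longrightarrow> x2 \<in> X \<Longrightarrow>
                      0 < (LINT \<theta>:\<Theta>|lborel. f x1 \<theta> * p x2 \<theta>)"
  shows "(\<forall>x1\<in>X. \<forall>x2\<in>X. \<forall>\<theta>\<in>\<Theta>.
             bayes_update \<Theta> f p x1 x2 \<theta> = bayes_update \<Theta> f p x2 x1 \<theta>)
         \<longleftrightarrow>
         (\<exists>\<pi> :: real \<Rightarrow> real. (\<forall>\<theta>\<in>\<Theta>. 0 \<le> \<pi> \<theta>) \<and>
            (\<forall>x\<in>X. set_integrable lborel \<Theta> (\<lambda>\<theta>. \<pi> \<theta> * p x \<theta>) \<and>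
                    0 < (LINT \<theta>:\<Theta>|lborel. \<pi> \<theta> * p x \<theta>) \<and>
                    (\<forall>\<theta>\<in>\<Theta>. f x \<theta> = \<pi> \<theta> * p x \<theta> / (LINT \<theta>':\<Theta>|lborel. \<pi> \<theta>' * p x \<theta>'))))"
proof
  assume sym: "\<forall>x1\<in>X. \<forall>x2\<in>X. \<forall>\<theta>\<in>\<Theta>.
             bayes_update \<Theta> f p x1 x2 \<theta> = bayes_update \<Theta> f p x2 x1 \<theta>"
  show "\<exists>\<pi> :: real \<Rightarrow> real. (\<forall>\<theta>\<in>\<Theta>. 0 \<le> \<pi> \<theta>) \<and>
            (\<forall>x\<in>X. set_integrable lborel \<Theta> (\<lambda>\<theta>. \<pi> \<theta> * p x \<theta>) \<and>
                    0 < (LINT \<theta>:\<Theta>|lborel. \<pi> \<theta> * p x \<theta>) \<and>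
                    (\<forall>\<theta>\<in>\<Theta>. f x \<theta> = \<pi> \<theta> * p x \<theta> / (LINT \<theta>':\<Theta>|lborel. \<pi> \<theta>' * p x \<theta>')))"
  proof (cases "X = {}")
    case True
    then show ?thesis by (intro exI[of _ "\<lambda>_. 0"]) auto
  next
    case False
    then obtain x0 where x0: "x0 \<in> X" by auto
    define \<pi> where "\<pi> = (\<lambda>\<theta>. f x0 \<theta> / p x0 \<theta>)"
    show ?thesis
    proof (intro exI[of _ \<pi>] conjI ballI)
      fix \<theta> assume "\<theta> \<in> \<Theta>"
      then show "0 \<le> \<pi> \<theta>" using f_dens[OF x0] p_pos[OF x0]
        unfolding \<pi>_def prob_density_on_def by (simp add: less_imp_le)
    next
      fix x assume x: "x \<in> X"
      define c where "c = (LINT \<theta>:\<Theta>|lborel. f x \<theta> * p x0 \<theta>) / (LINT \<theta>:\<Theta>|lborel. f x0 \<theta> * p x \<theta>)"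
      have cpos: "c > 0" unfolding c_def using denom_pos x x0 by simp
      have eq: "\<pi> \<theta> * p x \<theta> = (1/c) * f x \<theta>" if t: "\<theta> \<in> \<Theta>" for \<theta>
      proof -
        have b: "f x \<theta> * p x0 \<theta> / (LINT \<theta>:\<Theta>|lborel. f x \<theta> * p x0 \<theta>)
             = f x0 \<theta> * p x \<theta> / (LINT \<theta>:\<Theta>|lborel. f x0 \<theta> * p x \<theta>)"
          using sym x x0 t unfolding bayes_update_def by blast
        have p0: "p x0 \<theta> > 0" using p_pos x0 t by simp
        have d1: "(LINT \<theta>:\<Theta>|lborel. f x \<theta> * p x0 \<theta>) > 0" using denom_pos x x0 by simp
        have d2: "(LINT \<theta>:\<Theta>|lborel. f x0 \<theta> * p x \<theta>) > 0" using denom_pos x x0 by simp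
        show ?thesis using b p0 d1 d2 unfolding \<pi>_def c_def
          by (simp add: field_simps)
      qed
      have fd: "set_integrable lborel \<Theta> (f x)" "(LINT \<theta>:\<Theta>|lborel. f x \<theta>) = 1"
        using f_dens[OF x] unfolding prob_density_on_def by auto
      have I: "(LINT \<theta>:\<Theta>|lborel. \<pi> \<theta> * p x \<theta>) = 1/c"
        using set_int_eq(1)[of \<Theta> "\<lambda>\<theta>. \<pi> \<theta> * p x \<theta>" "1/c" "f x", OF eq] fd by simp
      show "set_integrable lborel \<Theta> (\<lambda>\<theta>. \<pi> \<theta> * p x \<theta>)"
        using set_int_eq(2)[of \<Theta> "\<lambda>\<theta>. \<pi> \<theta> * p x \<theta>" "1/c" "f x", OF eq] fd by simp
      show "0 < (LINT \<theta>:\<Theta>|lborel. \<pi> \<theta> * p x \<theta>)" using I cpos by simp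
      fix \<theta> assume "\<theta> \<in> \<Theta>"
      then show "f x \<theta> = \<pi> \<theta> * p x \<theta> / (LINT \<theta>':\<Theta>|lborel. \<pi> \<theta>' * p x \<theta>')"
        using I eq cpos by simp
    qed
  qed
next
  assume "\<exists>\<pi> :: real \<Rightarrow> real. (\<forall>\<theta>\<in>\<Theta>. 0 \<le> \<pi> \<theta>) \<and>
            (\<forall>x\<in>X. set_integrable lborel \<Theta> (\<lambda>\<theta>. \<pi> \<theta> * p x \<theta>) \<and>
                    0 < (LINT \<theta>:\<Theta>|lborel. \<pi> \<theta> * p x \<theta>) \<and>
                    (\<forall>\<theta>\<in>\<Theta>. f x \<theta> = \<pi> \<theta> * p x \<theta> / (LINT \<theta>':\<Theta>|lborel. \<pi> \<theta>' * p x \<theta>')))"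
  then obtain \<pi> :: "real \<Rightarrow> real" where
    h: "\<And>x. x \<in> X \<Longrightarrow> 0 < (LINT \<theta>:\<Theta>|lborel. \<pi> \<theta> * p x \<theta>)"
    "\<And>x \<theta>. x \<in> X \<Longrightarrow> \<theta> \<in> \<Theta> \<Longrightarrow> f x \<theta> = \<pi> \<theta> * p x \<theta> / (LINT \<theta>':\<Theta>|lborel. \<pi> \<theta>' * p x \<theta>')"
    by blast
  show "\<forall>x1\<in>X. \<forall>x2\<in>X. \<forall>\<theta>\<in>\<Theta>.
             bayes_update \<Theta> f p x1 x2 \<theta> = bayes_update \<Theta> f p x2 x1 \<theta>"
  proof (intro ballI)
    fix x1 x2 \<theta> assume x1: "x1 \<in> X" and x2: "x2 \<in> X" and t: "\<theta> \<in> \<Theta>"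
    define Z1 where "Z1 = (LINT \<theta>:\<Theta>|lborel. \<pi> \<theta> * p x1 \<theta>)"
    define Z2 where "Z2 = (LINT \<theta>:\<Theta>|lborel. \<pi> \<theta> * p x2 \<theta>)"
    define J where "J = (LINT \<theta>:\<Theta>|lborel. \<pi> \<theta> * p x1 \<theta> * p x2 \<theta>)"
    have z1: "Z1 > 0" "Z2 > 0" using h(1) x1 x2 unfolding Z1_def Z2_def by auto
    have A: "(LINT \<theta>:\<Theta>|lborel. f x1 \<theta> * p x2 \<theta>) = (1/Z1) * J"
      unfolding J_def by (rule set_int_eq(1)) (simp add: h(2)[OF x1] Z1_def)
    have B: "(LINT \<theta>:\<Theta>|lborel. f x2 \<theta> * p x1 \<theta>) = (1/Z2) * J"
      unfolding J_def by (rule set_int_eq(1)) (simp add: h(2)[OF x2] Z2_def mult_ac)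
    show "bayes_update \<Theta> f p x1 x2 \<theta> = bayes_update \<Theta> f p x2 x1 \<theta>"
    proof (cases "J = 0")
      case False
      have k1: "Z1 * f x1 \<theta> = \<pi> \<theta> * p x1 \<theta>" "Z2 * f x2 \<theta> = \<pi> \<theta> * p x2 \<theta>"
        using z1 h(2)[OF x1 t] h(2)[OF x2 t] unfolding Z1_def[symmetric] Z2_def[symmetric] by simp_all
      have "Z1 * (f x1 \<theta> * p x2 \<theta>) = Z2 * (f x2 \<theta> * p x1 \<theta>)"
        by (metis k1 mult.assoc mult.commute)
      then show ?thesis using z1 False unfolding bayes_update_def A B by (simp add: field_simps mult_ac)
    qed (simp add: bayes_update_def A B)
  qed
qed

end
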